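(* Let $r\in(0,1/2)$. For the repetition-coding distributed delay diversity scheme described in the context, there is a constant $C>0$, independent of $\mathrm{SNR}$, such that as $\mathrm{SNR}\to\infty$, $$\Pr[I_{R\text{-}TDA}<R,\ |\mathcal D(s)|=1]\sim C\,\widetilde{\mathrm{SNR}}^{-3(1-2r)}.$$
   Context: Network: a source $N_S$, two relays $N_{R_1},N_{R_2}$ and a destination $N_D$. The gains $\alpha_{i,j}$, $i\in\{S,R_1,R_2\}$, $j\in\{R_1,R_2,D\}$, $i\neq j$, are mutually independent zero-mean circularly symmetric complex Gaussian random variables with variances $\sigma^2_{i,j}>0$. For $\mathrm{SNR}>0$ set $\rho_0=\frac23\mathrm{SNR}$ and $\widetilde{\mathrm{SNR}}=\sigma^2_{S,D}\mathrm{SNR}$. The target rate is $R=r\log(1+\mathrm{SNR}\,\sigma^2_{S,D})$. Relay $R_k$ belongs to the decoding set $\mathcal D(s)$ iff $\frac12\log(1+\rho_0|\alpha_{S,R_k}|^2)\ge R$. Repetition-coding distributed delay diversity: successful relays retransmit the source's own codeword in phase 2, with bandwidth $B_w$ and delays $\tau_k$. Conditioned on $\mathcal D(s)$, $$I_{R\text{-}TDA}=\frac{1}{2B_w}\int_{-B_w/2}^{B_w/2}\log\left(1+\rho_0|\alpha_{S,D}|^2+\rho_0\Big|\sum_{R_k\in\mathcal D(s)}\alpha_{R_k,D}e^{j2\pi f\tau_k}\Big|^2\right)df.$$ In particular, if $\mathcal D(s)=\{R_j\}$ then $I_{R\text{-}TDA}=\frac12\log(1+\rho_0(|\alpha_{S,D}|^2+|\alpha_{R_j,D}|^2))$.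 The notation $f\sim g$ means $f/g\to1$ as $\mathrm{SNR}\to\infty$. *)

theory Defs
  imports "HOL-Probability.Probability" "HOL-Library.Landau_Symbols"
begin

datatype node = S | R1 | R2 | D

definition links :: "(node \<times> node) set" where
  "links = {(i,j). i \<in> {S,R1,R2} \<and> j \<in> {R1,R2,D} \<and> i \<noteq> j}"

text \<open>Density (w.r.t. Lebesgue measure on the complex plane) of a zero-mean
  circularly symmetric complex Gaussian with variance v.\<close>
definition cgauss_density :: "real \<Rightarrow> complex \<Rightarrow> real" where
  "cgauss_density v z = exp (- (cmod z)\<^sup>2 / v) / (pi * v)"

definition decoding_set :: "real \<Rightarrow> real \<Rightarrow> (node \<times> node \<Rightarrow> complex) \<Rightarrow> node set" where
  "decoding_set \<rho>0 Rt a = {k \<in> {R1, R2}. ln (1 + \<rho>0 * (cmod (a (S,k)))\<^sup>2) / 2 \<ge> Rt}"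

definition I_RTDA :: "real \<Rightarrow> (node \<Rightarrow> real) \<Rightarrow> real \<Rightarrow> (node \<times> node \<Rightarrow> complex) \<Rightarrow> node set \<Rightarrow> real" where
  "I_RTDA Bw \<tau> \<rho>0 a Ds =
     (1 / (2 * Bw)) * integral {-Bw/2..Bw/2}
       (\<lambda>f. ln (1 + \<rho>0 * (cmod (a (S,D)))\<^sup>2
                 + \<rho>0 * (cmod (\<Sum>k\<in>Ds. a (k,D) * cis (2 * pi * f * \<tau> k)))\<^sup>2))"

definition outage_one :: "'w measure \<Rightarrow> (node \<times> node \<Rightarrow> 'w \<Rightarrow> complex) \<Rightarrow> (node \<times> node \<Rightarrow> real)
     \<Rightarrow> real \<Rightarrow> (node \<Rightarrow> real) \<Rightarrow> real \<Rightarrow> real \<Rightarrow> real" where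
  "outage_one M \<alpha> \<sigma>2 Bw \<tau> r snr =
     (let \<rho>0 = 2/3 * snr; Rt = r * ln (1 + snr * \<sigma>2 (S,D)) in
      measure M {\<omega> \<in> space M.
        I_RTDA Bw \<tau> \<rho>0 (\<lambda>l. \<alpha> l \<omega>) (decoding_set \<rho>0 Rt (\<lambda>l. \<alpha> l \<omega>)) < Rt
        \<and> card (decoding_set \<rho>0 Rt (\<lambda>l. \<alpha> l \<omega>)) = 1})"

end

theory Submission
  imports Defs "HOL-Real_Asymp.Real_Asymp"
begin

lemma small_ball:
  fixes X :: "'w \<Rightarrow> 'a::euclidean_space"
  assumes P: "prob_space M"
  and dist: "distributed M lborel X (\<lambda>z. ennreal (exp (- Q z) / K))"
  and K: "K > 0" and c: "c \<ge> 0" and Q0: "\<And>z. 0 \<le> Q z" and Q: "\<And>z. Q z \<le> c * (norm z)^2"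
  shows "((\<lambda>\<rho>. measure M {\<omega>\<in>space M. norm (X \<omega>) < \<rho>} / \<rho>^DIM('a)) \<longlongrightarrow> unit_ball_vol DIM('a) / K) (at_right 0)"
proof -
  interpret prob_space M by fact
  define V where "V = unit_ball_vol DIM('a)"
  have V: "V > 0" unfolding V_def by simp
  have bounds: "exp (- c * \<rho>^2) * V / K \<le> measure M {\<omega>\<in>space M. norm (X \<omega>) < \<rho>} / \<rho>^DIM('a)
      \<and> measure M {\<omega>\<in>space M. norm (X \<omega>) < \<rho>} / \<rho>^DIM('a) \<le> V / K" if \<rho>: "\<rho> > 0" for \<rho>
  proof -
    have set: "{\<omega>\<in>space M. norm (X \<omega>) < \<rho>} = X -` ball 0 \<rho> \<inter> space M" by auto
    have e: "ennreal (measure M {\<omega>\<in>space M. norm (X \<omega>) < \<rho>})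
       = (\<integral>\<^sup>+z. ennreal (exp (- Q z) / K) * indicator (ball (0::'a) \<rho>) z \<partial>lborel)"
      unfolding set emeasure_eq_measure[symmetric] by (rule distributed_emeasure[OF dist]) simp
    have vol: "emeasure lborel (ball (0::'a) \<rho>) = ennreal (V * \<rho> ^ DIM('a))"
      unfolding V_def using \<rho> by (simp add: emeasure_ball)
    have up: "(\<integral>\<^sup>+z. ennreal (exp (- Q z) / K) * indicator (ball (0::'a) \<rho>) z \<partial>lborel)
        \<le> (\<integral>\<^sup>+z. ennreal (1 / K) * indicator (ball (0::'a) \<rho>) z \<partial>lborel)"
    proof (rule nn_integral_mono)
      fix z :: 'a
      show "ennreal (exp (- Q z) / K) * indicator (ball (0::'a) \<rho>) z \<le> ennreal (1 / K) * indicator (ball (0::'a) \<rho>) z"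
      proof (cases "z \<in> ball 0 \<rho>")
        case True
        have "exp (- Q z) \<le> 1" using Q0[of z] by simp
        then show ?thesis using K True by (simp add: divide_right_mono ennreal_leI)
      qed simp
    qed
    have lo: "(\<integral>\<^sup>+z. ennreal (exp (- c * \<rho>^2) / K) * indicator (ball (0::'a) \<rho>) z \<partial>lborel)
        \<le> (\<integral>\<^sup>+z. ennreal (exp (- Q z) / K) * indicator (ball (0::'a) \<rho>) z \<partial>lborel)"
    proof (rule nn_integral_mono)
      fix z :: 'a
      show "ennreal (exp (- c * \<rho>^2) / K) * indicator (ball (0::'a) \<rho>) z \<le> ennreal (exp (- Q z) / K) * indicator (ball (0::'a) \<rho>) z"
      proof (cases "z \<in> ball 0 \<rho>")
        case True
        then have "norm z < \<rho>" by simp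
        then have "norm z ^ 2 \<le> \<rho>^2" by (simp add: power_mono)
        then have "Q z \<le> c * \<rho>^2" using Q[of z] c by (meson mult_left_mono order_trans)
        then have "exp (- c * \<rho>^2) \<le> exp (- Q z)" by simp
        then show ?thesis using K True by (simp add: divide_right_mono ennreal_leI)
      qed simp
    qed
    have m0: "measure M {\<omega>\<in>space M. norm (X \<omega>) < \<rho>} \<le> V * \<rho> ^ DIM('a) / K"
    proof -
      have "ennreal (measure M {\<omega>\<in>space M. norm (X \<omega>) < \<rho>}) \<le> ennreal (1/K) * ennreal (V * \<rho> ^ DIM('a))"
        using e up by (simp add: nn_integral_cmult_indicator vol)
      also have "\<dots> = ennreal (V * \<rho> ^ DIM('a) / K)" using K V \<rho> by (subst ennreal_mult[symmetric]) (auto simp: field_simps)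
      finally show ?thesis using V \<rho> K by (simp add: ennreal_le_iff)
    qed
    have m1: "exp (- c * \<rho>^2) / K * (V * \<rho> ^ DIM('a)) \<le> measure M {\<omega>\<in>space M. norm (X \<omega>) < \<rho>}"
    proof -
      have "ennreal (exp (- c * \<rho>^2) / K * (V * \<rho> ^ DIM('a))) = ennreal (exp (- c * \<rho>^2) / K) * ennreal (V * \<rho> ^ DIM('a))"
        using K V \<rho> by (subst ennreal_mult[symmetric]) (auto simp: field_simps)
      also have "\<dots> \<le> ennreal (measure M {\<omega>\<in>space M. norm (X \<omega>) < \<rho>})"
        using e lo by (simp add: nn_integral_cmult_indicator vol)
      finally show ?thesis by (simp add: ennreal_le_iff)
    qed
    have pos: "\<rho> ^ DIM('a) > 0" using \<rho> by simp
    show ?thesis using m0 m1 pos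
      by (simp add: field_simps)
  qed
  have lim: "((\<lambda>\<rho>. exp (- c * \<rho>^2) * V / K) \<longlongrightarrow> exp (- c * 0^2) * V / K) (at_right 0)"
    using K by (intro tendsto_intros) auto
  show ?thesis
  proof (rule tendsto_sandwich[OF _ _ _ tendsto_const])
    show "\<forall>\<^sub>F \<rho> in at_right 0. exp (- c * \<rho>^2) * V / K \<le> measure M {\<omega>\<in>space M. norm (X \<omega>) < \<rho>} / \<rho>^DIM('a)"
      using bounds eventually_at_right_less[of 0] by (auto elim!: eventually_mono)
    show "\<forall>\<^sub>F \<rho> in at_right 0. measure M {\<omega>\<in>space M. norm (X \<omega>) < \<rho>} / \<rho>^DIM('a) \<le> unit_ball_vol DIM('a) / K"
      using bounds eventually_at_right_less[of 0] unfolding V_def by (auto elim!: eventually_mono)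
    show "((\<lambda>\<rho>. exp (- c * \<rho>^2) * V / K) \<longlongrightarrow> unit_ball_vol DIM('a) / K) (at_right 0)"
      using lim unfolding V_def by simp
  qed
qed
lemma indep3:
  fixes \<alpha> :: "'i \<Rightarrow> 'w \<Rightarrow> complex"
  assumes P: "prob_space M" and ind: "prob_space.indep_vars M (\<lambda>_. lborel) \<alpha> L"
    and mem: "a \<in> L" "b \<in> L" "c \<in> L" "d \<in> L"
    and dist: "a \<noteq> b" "a \<noteq> c" "a \<noteq> d" "b \<noteq> c" "b \<noteq> d" "c \<noteq> d"
  shows "measure M {\<omega>\<in>space M. cmod (\<alpha> a \<omega>)^2 < \<theta> \<and> cmod (\<alpha> b \<omega>)^2 < \<theta> \<and> cmod (\<alpha> c \<omega>)^2 + cmod (\<alpha> d \<omega>)^2 < \<theta>}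
       = measure M {\<omega>\<in>space M. cmod (\<alpha> a \<omega>)^2 < \<theta>} * measure M {\<omega>\<in>space M. cmod (\<alpha> b \<omega>)^2 < \<theta>}
         * measure M {\<omega>\<in>space M. cmod (\<alpha> c \<omega>)^2 + cmod (\<alpha> d \<omega>)^2 < \<theta>}"
   and "measure M {\<omega>\<in>space M. cmod (\<alpha> a \<omega>)^2 < \<theta> \<and> cmod (\<alpha> c \<omega>)^2 + cmod (\<alpha> d \<omega>)^2 < \<theta>}
       = measure M {\<omega>\<in>space M. cmod (\<alpha> a \<omega>)^2 < \<theta>}
         * measure M {\<omega>\<in>space M. cmod (\<alpha> c \<omega>)^2 + cmod (\<alpha> d \<omega>)^2 < \<theta>}"
proof -
  interpret prob_space M by fact
  define K :: "nat \<Rightarrow> 'i set" where "K = (\<lambda>j. if j = 0 then {a} else if j = 1 then {b} else {c,d})"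
  define J :: "nat set" where "J = {0,1,2}"
  have KL: "\<And>j. j \<in> J \<Longrightarrow> K j \<subseteq> L" using mem unfolding K_def J_def by auto
  have disj: "disjoint_family_on K J" using dist unfolding disjoint_family_on_def K_def J_def by auto
  have i1: "indep_vars (\<lambda>j. PiM (K j) (\<lambda>_. lborel)) (\<lambda>j \<omega>. restrict (\<lambda>i. \<alpha> i \<omega>) (K j)) J"
    by (rule indep_vars_restrict[OF ind KL disj])
  define Y :: "nat \<Rightarrow> ('i \<Rightarrow> complex) \<Rightarrow> real" where
    "Y = (\<lambda>j f. if j = 0 then cmod (f a)^2 else if j = 1 then cmod (f b)^2 else cmod (f c)^2 + cmod (f d)^2)"
  have Ym: "Y j \<in> measurable (PiM (K j) (\<lambda>_. lborel)) borel" if jJ: "j \<in> J" for j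
  proof -
    consider "j = 0" | "j = 1" | "j = 2" using jJ by (fastforce simp: J_def)
    then show ?thesis
    proof cases
      case 1
      have "(\<lambda>f. f a) \<in> measurable (PiM (K j) (\<lambda>_. lborel)) (lborel :: complex measure)"
        using 1 unfolding K_def by (intro measurable_component_singleton) auto
      then show ?thesis using 1 unfolding Y_def by simp
    next
      case 2
      have "(\<lambda>f. f b) \<in> measurable (PiM (K j) (\<lambda>_. lborel)) (lborel :: complex measure)"
        using 2 unfolding K_def by (intro measurable_component_singleton) auto
      then show ?thesis using 2 unfolding Y_def by simp
    next
      case 3
      have "(\<lambda>f. f c) \<in> measurable (PiM (K j) (\<lambda>_. lborel)) (lborel :: complex measure)"
        using 3 unfolding K_def by (intro measurable_component_singleton) auto
      moreover have "(\<lambda>f. f d) \<in> measurable (PiM (K j) (\<lambda>_. lborel)) (lborel :: complex measure)"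
        using 3 unfolding K_def by (intro measurable_component_singleton) auto
      ultimately show ?thesis using 3 unfolding Y_def by simp
    qed
  qed
  have i2: "indep_vars (\<lambda>_. borel) (\<lambda>j \<omega>. Y j (restrict (\<lambda>i. \<alpha> i \<omega>) (K j))) J"
    by (rule indep_vars_compose2[OF i1 Ym])
  have i3: "indep_events (\<lambda>j. {\<omega>\<in>space M. Y j (restrict (\<lambda>i. \<alpha> i \<omega>) (K j)) < \<theta>}) J"
    by (rule indep_eventsI_indep_vars[OF i2]) auto
  define F where "F = (\<lambda>j. {\<omega>\<in>space M. Y j (restrict (\<lambda>i. \<alpha> i \<omega>) (K j)) < \<theta>})"
  have F0: "F 0 = {\<omega>\<in>space M. cmod (\<alpha> a \<omega>)^2 < \<theta>}" unfolding F_def Y_def K_def by simp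
  have F1: "F 1 = {\<omega>\<in>space M. cmod (\<alpha> b \<omega>)^2 < \<theta>}" unfolding F_def Y_def K_def by simp
  have F2: "F 2 = {\<omega>\<in>space M. cmod (\<alpha> c \<omega>)^2 + cmod (\<alpha> d \<omega>)^2 < \<theta>}" unfolding F_def Y_def K_def by simp
  have pr: "prob (\<Inter>j\<in>I. F j) = (\<Prod>j\<in>I. prob (F j))" if "I \<subseteq> J" "I \<noteq> {}" for I
    using i3 that unfolding indep_events_def F_def J_def by (auto intro: finite_subset)
  have p3: "prob (F 0 \<inter> (F 1 \<inter> F 2)) = prob (F 0) * (prob (F 1) * prob (F 2))"
    using pr[of "{0,1,2}"] by (simp add: J_def)
  have p2: "prob (F 0 \<inter> F 2) = prob (F 0) * prob (F 2)"
    using pr[of "{0,2}"] by (simp add: J_def)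
  have e3: "{\<omega>\<in>space M. cmod (\<alpha> a \<omega>)^2 < \<theta>} \<inter> ({\<omega>\<in>space M. cmod (\<alpha> b \<omega>)^2 < \<theta>} \<inter> {\<omega>\<in>space M. cmod (\<alpha> c \<omega>)^2 + cmod (\<alpha> d \<omega>)^2 < \<theta>}) = {\<omega>\<in>space M. cmod (\<alpha> a \<omega>)^2 < \<theta> \<and> cmod (\<alpha> b \<omega>)^2 < \<theta> \<and> cmod (\<alpha> c \<omega>)^2 + cmod (\<alpha> d \<omega>)^2 < \<theta>}"
    by auto
  have e2: "{\<omega>\<in>space M. cmod (\<alpha> a \<omega>)^2 < \<theta>} \<inter> {\<omega>\<in>space M. cmod (\<alpha> c \<omega>)^2 + cmod (\<alpha> d \<omega>)^2 < \<theta>} = {\<omega>\<in>space M. cmod (\<alpha> a \<omega>)^2 < \<theta> \<and> cmod (\<alpha> c \<omega>)^2 + cmod (\<alpha> d \<omega>)^2 < \<theta>}"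
    by auto
  show "measure M {\<omega>\<in>space M. cmod (\<alpha> a \<omega>)^2 < \<theta> \<and> cmod (\<alpha> b \<omega>)^2 < \<theta> \<and> cmod (\<alpha> c \<omega>)^2 + cmod (\<alpha> d \<omega>)^2 < \<theta>}
       = measure M {\<omega>\<in>space M. cmod (\<alpha> a \<omega>)^2 < \<theta>} * measure M {\<omega>\<in>space M. cmod (\<alpha> b \<omega>)^2 < \<theta>}
         * measure M {\<omega>\<in>space M. cmod (\<alpha> c \<omega>)^2 + cmod (\<alpha> d \<omega>)^2 < \<theta>}"
    unfolding e3[symmetric] mult.assoc using p3 unfolding F0 F1 F2 .
  show "measure M {\<omega>\<in>space M. cmod (\<alpha> a \<omega>)^2 < \<theta> \<and> cmod (\<alpha> c \<omega>)^2 + cmod (\<alpha> d \<omega>)^2 < \<theta>}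
       = measure M {\<omega>\<in>space M. cmod (\<alpha> a \<omega>)^2 < \<theta>}
         * measure M {\<omega>\<in>space M. cmod (\<alpha> c \<omega>)^2 + cmod (\<alpha> d \<omega>)^2 < \<theta>}"
    unfolding e2[symmetric] using p2 unfolding F0 F2 .
qed
lemma pair_dist:
  fixes \<alpha> :: "'i \<Rightarrow> 'w \<Rightarrow> complex"
  assumes P: "prob_space M" and ind: "prob_space.indep_vars M (\<lambda>_. lborel) \<alpha> L"
    and mem: "c \<in> L" "d \<in> L" and cd: "c \<noteq> d"
    and dc: "distributed M lborel (\<alpha> c) (\<lambda>z. ennreal (cgauss_density s1 z))"
    and dd: "distributed M lborel (\<alpha> d) (\<lambda>z. ennreal (cgauss_density s2 z))"
    and s: "s1 > 0" "s2 > 0"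
  shows "distributed M lborel (\<lambda>\<omega>. (\<alpha> c \<omega>, \<alpha> d \<omega>))
     (\<lambda>z. ennreal (exp (- ((cmod (fst z))^2 / s1 + (cmod (snd z))^2 / s2)) / (pi * s1 * (pi * s2))))"
proof -
  interpret prob_space M by fact
  define K :: "bool \<Rightarrow> 'i set" where "K = case_bool {c} {d}"
  have KL: "\<And>j. j \<in> UNIV \<Longrightarrow> K j \<subseteq> L" using mem unfolding K_def by (auto split: bool.split)
  have disj: "disjoint_family_on K UNIV" using cd unfolding disjoint_family_on_def K_def by (auto split: bool.split)
  have i1: "indep_vars (\<lambda>j. PiM (K j) (\<lambda>_. lborel)) (\<lambda>j \<omega>. restrict (\<lambda>i. \<alpha> i \<omega>) (K j)) UNIV"
    by (rule indep_vars_restrict[OF ind KL disj])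
  define Y :: "bool \<Rightarrow> ('i \<Rightarrow> complex) \<Rightarrow> complex" where "Y = (\<lambda>j f. f (case_bool c d j))"
  have Ym: "Y j \<in> measurable (PiM (K j) (\<lambda>_. lborel)) lborel" for j
    unfolding Y_def K_def by (intro measurable_component_singleton) (auto split: bool.split)
  have i2: "indep_vars (\<lambda>_. lborel) (\<lambda>j \<omega>. Y j (restrict (\<lambda>i. \<alpha> i \<omega>) (K j))) UNIV"
    by (rule indep_vars_compose2[OF i1 Ym])
  have iv: "indep_var lborel (\<alpha> c) lborel (\<alpha> d)"
    unfolding indep_var_def
    using i2 by (rule indep_vars_cong[THEN iffD1, rotated -1]) (auto simp: Y_def K_def split: bool.split)
  have "distributed M (lborel \<Otimes>\<^sub>M lborel) (\<lambda>\<omega>. (\<alpha> c \<omega>, \<alpha> d \<omega>))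
      (\<lambda>(x, y). ennreal (cgauss_density s1 x) * ennreal (cgauss_density s2 y))"
    by (rule distributed_joint_indep[OF _ _ dc dd iv]) (auto intro: sigma_finite_lborel)
  moreover have "(\<lambda>(x, y). ennreal (cgauss_density s1 x) * ennreal (cgauss_density s2 y))
     = (\<lambda>z. ennreal (exp (- ((cmod (fst z))^2 / s1 + (cmod (snd z))^2 / s2)) / (pi * s1 * (pi * s2))))"
    using s by (auto simp: cgauss_density_def ennreal_mult[symmetric] exp_add[symmetric] exp_minus field_simps)
  ultimately show ?thesis by (simp add: lborel_prod)
qed
lemma thresh:
  fixes \<rho>0 B r x :: real
  assumes "\<rho>0 > 0" "B > 1" "x \<ge> 0"
  shows "(ln (1 + \<rho>0 * x) / 2 \<ge> r * ln B) \<longleftrightarrow> x \<ge> (B powr (2*r) - 1) / \<rho>0"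
    and "(ln (1 + \<rho>0 * x) / 2 < r * ln B) \<longleftrightarrow> x < (B powr (2*r) - 1) / \<rho>0"
proof -
  have p: "1 + \<rho>0 * x > 0" using assms by (simp add: add_pos_nonneg)
  have e: "2 * (r * ln B) = ln (B powr (2*r))" using assms by (simp add: ln_powr)
  have bp: "B powr (2*r) > 0" using assms by simp
  have "(ln (1 + \<rho>0 * x) / 2 \<ge> r * ln B) \<longleftrightarrow> ln (1 + \<rho>0 * x) \<ge> ln (B powr (2*r))"
    using e by linarith
  also have "\<dots> \<longleftrightarrow> 1 + \<rho>0 * x \<ge> B powr (2*r)" by (rule ln_le_cancel_iff[OF bp p])
  also have "\<dots> \<longleftrightarrow> x \<ge> (B powr (2*r) - 1) / \<rho>0" using assms by (simp add: field_simps)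
  finally show "(ln (1 + \<rho>0 * x) / 2 \<ge> r * ln B) \<longleftrightarrow> x \<ge> (B powr (2*r) - 1) / \<rho>0" .
  have "(ln (1 + \<rho>0 * x) / 2 < r * ln B) \<longleftrightarrow> ln (1 + \<rho>0 * x) < ln (B powr (2*r))"
    using e by linarith
  also have "\<dots> \<longleftrightarrow> 1 + \<rho>0 * x < B powr (2*r)" by (rule ln_less_cancel_iff[OF p bp])
  also have "\<dots> \<longleftrightarrow> x < (B powr (2*r) - 1) / \<rho>0" using assms by (simp add: field_simps)
  finally show "(ln (1 + \<rho>0 * x) / 2 < r * ln B) \<longleftrightarrow> x < (B powr (2*r) - 1) / \<rho>0" .
qed

lemma I_single:
  assumes "Bw > 0"
  shows "I_RTDA Bw \<tau> \<rho>0 a {j} = ln (1 + \<rho>0 * ((cmod (a (S,D)))\<^sup>2 + (cmod (a (j,D)))\<^sup>2)) / 2"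
  using assms by (simp add: I_RTDA_def norm_mult algebra_simps)

lemma event_eq:
  fixes a :: "node \<times> node \<Rightarrow> complex" and r B \<rho>0 Bw :: real
  assumes Bw: "Bw > 0" and \<rho>0: "\<rho>0 > 0" and B: "B > 1"
  defines "\<theta> \<equiv> (B powr (2*r) - 1) / \<rho>0"
  shows "(I_RTDA Bw \<tau> \<rho>0 a (decoding_set \<rho>0 (r * ln B) a) < r * ln B
          \<and> card (decoding_set \<rho>0 (r * ln B) a) = 1) \<longleftrightarrow>
     ((cmod (a (S,R1)))\<^sup>2 \<ge> \<theta> \<and> (cmod (a (S,R2)))\<^sup>2 < \<theta> \<and> (cmod (a (S,D)))\<^sup>2 + (cmod (a (R1,D)))\<^sup>2 < \<theta>)
   \<or> ((cmod (a (S,R2)))\<^sup>2 \<ge> \<theta> \<and> (cmod (a (S,R1)))\<^sup>2 < \<theta> \<and> (cmod (a (S,D)))\<^sup>2 + (cmod (a (R2,D)))\<^sup>2 < \<theta>)"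
proof -
  have ds: "decoding_set \<rho>0 (r * ln B) a = {k \<in> {R1,R2}. (cmod (a (S,k)))\<^sup>2 \<ge> \<theta>}"
    unfolding decoding_set_def \<theta>_def using thresh(1)[OF \<rho>0 B] by auto
  have I: "I_RTDA Bw \<tau> \<rho>0 a {j} < r * ln B \<longleftrightarrow> (cmod (a (S,D)))\<^sup>2 + (cmod (a (j,D)))\<^sup>2 < \<theta>" for j
    unfolding I_single[OF Bw] \<theta>_def by (rule thresh(2)[OF \<rho>0 B]) simp
  consider "(cmod (a (S,R1)))\<^sup>2 \<ge> \<theta>" "(cmod (a (S,R2)))\<^sup>2 \<ge> \<theta>"
    | "(cmod (a (S,R1)))\<^sup>2 \<ge> \<theta>" "(cmod (a (S,R2)))\<^sup>2 < \<theta>"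
    | "(cmod (a (S,R1)))\<^sup>2 < \<theta>" "(cmod (a (S,R2)))\<^sup>2 \<ge> \<theta>"
    | "(cmod (a (S,R1)))\<^sup>2 < \<theta>" "(cmod (a (S,R2)))\<^sup>2 < \<theta>" by linarith
  then show ?thesis
  proof cases
    case 1
    then have "decoding_set \<rho>0 (r * ln B) a = {R1,R2}" unfolding ds by auto
    then show ?thesis using 1 by auto
  next
    case 2
    then have "decoding_set \<rho>0 (r * ln B) a = {R1}" unfolding ds by auto
    then show ?thesis using 2 I[of R1] by auto
  next
    case 3
    then have "decoding_set \<rho>0 (r * ln B) a = {R2}" unfolding ds by auto
    then show ?thesis using 3 I[of R2] by auto
  next
    case 4
    then have "decoding_set \<rho>0 (r * ln B) a = {}" unfolding ds by auto
    then show ?thesis using 4 by auto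
  qed
qed

lemma small_ball_sq:
  fixes X :: "'w \<Rightarrow> 'a::euclidean_space"
  assumes P: "prob_space M"
  and dist: "distributed M lborel X (\<lambda>z. ennreal (exp (- Q z) / K))"
  and K: "K > 0" and c: "c \<ge> 0" and Q0: "\<And>z. 0 \<le> Q z" and Q: "\<And>z. Q z \<le> c * (norm z)^2"
  shows "((\<lambda>\<theta>. measure M {\<omega>\<in>space M. norm (X \<omega>)^2 < \<theta>} / (sqrt \<theta>)^DIM('a)) \<longlongrightarrow> unit_ball_vol DIM('a) / K) (at_right 0)"
proof -
  have sq: "filterlim sqrt (at_right 0) (at_right (0::real))"
    by real_asymp
  have l: "((\<lambda>\<theta>. measure M {\<omega>\<in>space M. norm (X \<omega>) < sqrt \<theta>} / (sqrt \<theta>)^DIM('a)) \<longlongrightarrow> unit_ball_vol DIM('a) / K) (at_right 0)"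
    using filterlim_compose[OF small_ball[OF P dist K c Q0 Q] sq] .
  show ?thesis
  proof (rule Lim_transform_eventually[OF l])
    show "\<forall>\<^sub>F \<theta> in at_right 0. measure M {\<omega>\<in>space M. norm (X \<omega>) < sqrt \<theta>} / (sqrt \<theta>)^DIM('a)
        = measure M {\<omega>\<in>space M. norm (X \<omega>)^2 < \<theta>} / (sqrt \<theta>)^DIM('a)"
      using eventually_at_right_less[of "0::real"]
    proof (rule eventually_mono)
      fix \<theta> :: real assume "0 < \<theta>"
      then have "\<And>t::real. t \<ge> 0 \<Longrightarrow> t < sqrt \<theta> \<longleftrightarrow> t^2 < \<theta>"
        by (metis real_less_rsqrt real_sqrt_less_iff real_sqrt_pow2 real_sqrt_power less_le_trans not_le order.strict_iff_not)
      then show "measure M {\<omega>\<in>space M. norm (X \<omega>) < sqrt \<theta>} / (sqrt \<theta>)^DIM('a)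
        = measure M {\<omega>\<in>space M. norm (X \<omega>)^2 < \<theta>} / (sqrt \<theta>)^DIM('a)" by simp
    qed
  qed
qed

theorem lemma4:
  fixes M :: "'w measure" and \<alpha> :: "node \<times> node \<Rightarrow> 'w \<Rightarrow> complex"
    and \<sigma>2 :: "node \<times> node \<Rightarrow> real" and Bw :: real and \<tau> :: "node \<Rightarrow> real" and r :: real
  assumes "prob_space M"
    and "\<forall>l\<in>links. \<sigma>2 l > 0"
    and "prob_space.indep_vars M (\<lambda>_. lborel) \<alpha> links"
    and "\<forall>l\<in>links. distributed M lborel (\<alpha> l) (\<lambda>z. ennreal (cgauss_density (\<sigma>2 l) z))"
    and "Bw > 0"
    and "0 < r" and "r < 1/2"
  shows "\<exists>C>0. (\<lambda>snr. outage_one M \<alpha> \<sigma>2 Bw \<tau> r snr)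
            \<sim>[at_top] (\<lambda>snr. C * (\<sigma>2 (S,D) * snr) powr (- 3 * (1 - 2 * r)))"
proof -
  note P = assms(1) and sig = assms(2) and ind = assms(3) and dist = assms(4)
  interpret prob_space M by fact
  have L: "(S,R1) \<in> links" "(S,R2) \<in> links" "(S,D) \<in> links" "(R1,D) \<in> links" "(R2,D) \<in> links"
    by (auto simp: links_def)
  have meas[measurable]: "\<alpha> l \<in> borel_measurable M" if "l \<in> links" for l
    using distributed_measurable[OF dist[rule_format, OF that]] by simp
  have m1[measurable]: "\<alpha> (S,R1) \<in> borel_measurable M" "\<alpha> (S,R2) \<in> borel_measurable M" "\<alpha> (S,D) \<in> borel_measurable M"
    "\<alpha> (R1,D) \<in> borel_measurable M" "\<alpha> (R2,D) \<in> borel_measurable M" using meas L by auto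
  define \<sigma> where "\<sigma> = \<sigma>2 (S,D)"
  have \<sigma>: "\<sigma> > 0" using sig L unfolding \<sigma>_def by auto
  define p where "p = (\<lambda>j \<theta>. measure M {\<omega>\<in>space M. (cmod (\<alpha> (S,j) \<omega>))^2 < \<theta>})"
  define q where "q = (\<lambda>j \<theta>. measure M {\<omega>\<in>space M. (cmod (\<alpha> (S,D) \<omega>))^2 + (cmod (\<alpha> (j,D) \<omega>))^2 < \<theta>})"
  define F where "F = (\<lambda>\<theta>. (p R2 \<theta> * q R1 \<theta> - p R2 \<theta> * p R1 \<theta> * q R1 \<theta>) + (p R1 \<theta> * q R2 \<theta> - p R1 \<theta> * p R2 \<theta> * q R2 \<theta>))"
  define th where "th = (\<lambda>snr::real. ((1 + snr * \<sigma>) powr (2*r) - 1) / (2/3 * snr))"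
  have Ej: "measure M {\<omega>\<in>space M. (cmod (\<alpha> (S,j) \<omega>))^2 \<ge> \<theta> \<and> (cmod (\<alpha> (S,k) \<omega>))^2 < \<theta>
              \<and> (cmod (\<alpha> (S,D) \<omega>))^2 + (cmod (\<alpha> (j,D) \<omega>))^2 < \<theta>}
        = p k \<theta> * q j \<theta> - p k \<theta> * p j \<theta> * q j \<theta>"
    if jk: "(j = R1 \<and> k = R2) \<or> (j = R2 \<and> k = R1)" for j k \<theta>
  proof -
    have mem: "(S,k) \<in> links" "(S,j) \<in> links" "(S,D) \<in> links" "(j,D) \<in> links" using jk L by auto
    have dd: "(S,k) \<noteq> (S,j)" "(S,k) \<noteq> (S,D)" "(S,k) \<noteq> (j,D)" "(S,j) \<noteq> (S,D)" "(S,j) \<noteq> (j,D)" "(S,D) \<noteq> (j,D)"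
      using jk by auto
    note I = indep3[OF P ind mem dd, of \<theta>]
    have mj: "\<alpha> (S,j) \<in> borel_measurable M" "\<alpha> (S,k) \<in> borel_measurable M" "\<alpha> (j,D) \<in> borel_measurable M"
      using meas mem by auto
    let ?A = "{\<omega>\<in>space M. (cmod (\<alpha> (S,k) \<omega>))^2 < \<theta> \<and> (cmod (\<alpha> (S,D) \<omega>))^2 + (cmod (\<alpha> (j,D) \<omega>))^2 < \<theta>}"
    let ?B = "{\<omega>\<in>space M. (cmod (\<alpha> (S,k) \<omega>))^2 < \<theta> \<and> (cmod (\<alpha> (S,j) \<omega>))^2 < \<theta> \<and> (cmod (\<alpha> (S,D) \<omega>))^2 + (cmod (\<alpha> (j,D) \<omega>))^2 < \<theta>}"
    have eq: "{\<omega>\<in>space M. (cmod (\<alpha> (S,j) \<omega>))^2 \<ge> \<theta> \<and> (cmod (\<alpha> (S,k) \<omega>))^2 < \<theta>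
              \<and> (cmod (\<alpha> (S,D) \<omega>))^2 + (cmod (\<alpha> (j,D) \<omega>))^2 < \<theta>} = ?A - ?B" by auto
    have "?A \<in> events" "?B \<in> events" using mj by measurable
    then have "measure M (?A - ?B) = measure M ?A - measure M ?B"
      by (intro finite_measure_Diff) auto
    then show ?thesis unfolding eq I p_def q_def by (simp add: mult_ac)
  qed
  have out: "outage_one M \<alpha> \<sigma>2 Bw \<tau> r snr = F (th snr)" if snr: "snr > 0" for snr
  proof -
    have B: "1 + snr * \<sigma> > 1" using snr \<sigma> by simp
    have r0: "2/3 * snr > 0" using snr by simp
    let ?E1 = "{\<omega>\<in>space M. (cmod (\<alpha> (S,R1) \<omega>))^2 \<ge> th snr \<and> (cmod (\<alpha> (S,R2) \<omega>))^2 < th snr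
              \<and> (cmod (\<alpha> (S,D) \<omega>))^2 + (cmod (\<alpha> (R1,D) \<omega>))^2 < th snr}"
    let ?E2 = "{\<omega>\<in>space M. (cmod (\<alpha> (S,R2) \<omega>))^2 \<ge> th snr \<and> (cmod (\<alpha> (S,R1) \<omega>))^2 < th snr
              \<and> (cmod (\<alpha> (S,D) \<omega>))^2 + (cmod (\<alpha> (R2,D) \<omega>))^2 < th snr}"
    have "outage_one M \<alpha> \<sigma>2 Bw \<tau> r snr = measure M (?E1 \<union> ?E2)"
      unfolding outage_one_def Let_def \<sigma>_def[symmetric]
      using event_eq[OF assms(5) r0 B, of \<tau> "\<lambda>l. \<alpha> l _"] unfolding th_def
      by (intro arg_cong[where f="measure M"]) auto
    also have "\<dots> = measure M ?E1 + measure M ?E2"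
      by (intro finite_measure_Union) (measurable, auto)
    also have "\<dots> = F (th snr)" unfolding F_def using Ej[of R1 R2] Ej[of R2 R1] by simp
    finally show ?thesis .
  qed
  have pl: "((\<lambda>\<theta>. p j \<theta> / \<theta>) \<longlongrightarrow> unit_ball_vol 2 / (pi * \<sigma>2 (S,j))) (at_right 0)"
    if jl: "(S,j) \<in> links" for j
  proof -
    define s where "s = \<sigma>2 (S,j)"
    have s: "s > 0" using sig jl unfolding s_def by auto
    have d: "distributed M lborel (\<alpha> (S,j)) (\<lambda>z. ennreal (exp (- ((\<lambda>z. (cmod z)^2 / s) z)) / (pi * s)))"
      using dist jl unfolding s_def by (simp add: cgauss_density_def)
    have l: "((\<lambda>\<theta>. measure M {\<omega>\<in>space M. norm (\<alpha> (S,j) \<omega>)^2 < \<theta>} / (sqrt \<theta>)^DIM(complex)) \<longlongrightarrow> unit_ball_vol DIM(complex) / (pi * s)) (at_right 0)"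
      by (rule small_ball_sq[OF P d, of "1/s"]) (use s in auto)
    show ?thesis
    proof (rule Lim_transform_eventually)
      show "((\<lambda>\<theta>. measure M {\<omega>\<in>space M. norm (\<alpha> (S,j) \<omega>)^2 < \<theta>} / (sqrt \<theta>)^DIM(complex)) \<longlongrightarrow> unit_ball_vol 2 / (pi * \<sigma>2 (S,j))) (at_right 0)"
        using l unfolding s_def by simp
      show "\<forall>\<^sub>F \<theta> in at_right 0. measure M {\<omega>\<in>space M. norm (\<alpha> (S,j) \<omega>)^2 < \<theta>} / (sqrt \<theta>)^DIM(complex) = p j \<theta> / \<theta>"
        using eventually_at_right_less[of "0::real"] by (rule eventually_mono) (simp add: p_def)
    qed
  qed
  have ql: "((\<lambda>\<theta>. q j \<theta> / \<theta>^2) \<longlongrightarrow> unit_ball_vol 4 / (pi * \<sigma>2 (S,D) * (pi * \<sigma>2 (j,D)))) (at_right 0)"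
    if jl: "(j,D) \<in> links" "j \<noteq> S" for j
  proof -
    define s1 where "s1 = \<sigma>2 (S,D)"
    define s2 where "s2 = \<sigma>2 (j,D)"
    have s: "s1 > 0" "s2 > 0" using sig jl L unfolding s1_def s2_def by auto
    have d0: "distributed M lborel (\<lambda>\<omega>. (\<alpha> (S,D) \<omega>, \<alpha> (j,D) \<omega>))
     (\<lambda>z. ennreal (exp (- ((cmod (fst z))^2 / s1 + (cmod (snd z))^2 / s2)) / (pi * s1 * (pi * s2))))"
      by (rule pair_dist[OF P ind L(3) jl(1)]) (use jl dist L s in \<open>auto simp: s1_def s2_def\<close>)
    have d: "distributed M lborel (\<lambda>\<omega>. (\<alpha> (S,D) \<omega>, \<alpha> (j,D) \<omega>))
     (\<lambda>z. ennreal (exp (- ((\<lambda>z. (cmod (fst z))^2 / s1 + (cmod (snd z))^2 / s2) z)) / (pi * s1 * (pi * s2))))"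
      using d0 by simp
    have Qb: "(cmod (fst z))^2 / s1 + (cmod (snd z))^2 / s2 \<le> (1/s1 + 1/s2) * (norm z)^2" for z :: "complex \<times> complex"
    proof -
      have n: "(norm z)^2 = (cmod (fst z))^2 + (cmod (snd z))^2"
        by (simp add: norm_prod_def)
      have "(cmod (fst z))^2 / s1 \<le> (1/s1 + 1/s2) * (cmod (fst z))^2"
        using s by (simp add: field_simps)
      moreover have "(cmod (snd z))^2 / s2 \<le> (1/s1 + 1/s2) * (cmod (snd z))^2"
        using s by (simp add: field_simps)
      ultimately show ?thesis unfolding n by (simp add: distrib_left)
    qed
    have l: "((\<lambda>\<theta>. measure M {\<omega>\<in>space M. norm (\<alpha> (S,D) \<omega>, \<alpha> (j,D) \<omega>)^2 < \<theta>} / (sqrt \<theta>)^DIM(complex \<times> complex)) \<longlongrightarrow> unit_ball_vol DIM(complex \<times> complex) / (pi * s1 * (pi * s2))) (at_right 0)"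
      by (rule small_ball_sq[OF P d, of "1/s1 + 1/s2"]) (use s Qb in auto)
    show ?thesis
    proof (rule Lim_transform_eventually)
      show "((\<lambda>\<theta>. measure M {\<omega>\<in>space M. norm (\<alpha> (S,D) \<omega>, \<alpha> (j,D) \<omega>)^2 < \<theta>} / (sqrt \<theta>)^DIM(complex \<times> complex)) \<longlongrightarrow> unit_ball_vol 4 / (pi * \<sigma>2 (S,D) * (pi * \<sigma>2 (j,D)))) (at_right 0)"
        using l unfolding s1_def s2_def by simp
      show "\<forall>\<^sub>F \<theta> in at_right 0. measure M {\<omega>\<in>space M. norm (\<alpha> (S,D) \<omega>, \<alpha> (j,D) \<omega>)^2 < \<theta>} / (sqrt \<theta>)^DIM(complex \<times> complex) = q j \<theta> / \<theta>^2"
        using eventually_at_right_less[of "0::real"]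
      proof (rule eventually_mono)
        fix \<theta> :: real assume t: "0 < \<theta>"
        have "(sqrt \<theta>)^4 = \<theta>^2" using t by (metis power_mult real_sqrt_pow2 less_imp_le num_double numeral_times_numeral)
        then show "measure M {\<omega>\<in>space M. norm (\<alpha> (S,D) \<omega>, \<alpha> (j,D) \<omega>)^2 < \<theta>} / (sqrt \<theta>)^DIM(complex \<times> complex) = q j \<theta> / \<theta>^2"
          by (simp add: q_def norm_prod_def)
      qed
    qed
  qed
  define a1 where "a1 = unit_ball_vol 2 / (pi * \<sigma>2 (S,R1))"
  define a2 where "a2 = unit_ball_vol 2 / (pi * \<sigma>2 (S,R2))"
  define b1 where "b1 = unit_ball_vol 4 / (pi * \<sigma>2 (S,D) * (pi * \<sigma>2 (R1,D)))"
  define b2 where "b2 = unit_ball_vol 4 / (pi * \<sigma>2 (S,D) * (pi * \<sigma>2 (R2,D)))"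
  have pos: "a1 > 0" "a2 > 0" "b1 > 0" "b2 > 0"
    using sig L unfolding a1_def a2_def b1_def b2_def by (auto intro!: divide_pos_pos mult_pos_pos)
  define Lc where "Lc = a2 * b1 + a1 * b2"
  have Lc: "Lc > 0" unfolding Lc_def using pos by (simp add: add_pos_pos)
  have G: "((\<lambda>\<theta>. (p R2 \<theta>/\<theta>)*(q R1 \<theta>/\<theta>^2) - (p R2 \<theta>/\<theta>)*(p R1 \<theta>/\<theta>)*(q R1 \<theta>/\<theta>^2)*\<theta>
          + ((p R1 \<theta>/\<theta>)*(q R2 \<theta>/\<theta>^2) - (p R1 \<theta>/\<theta>)*(p R2 \<theta>/\<theta>)*(q R2 \<theta>/\<theta>^2)*\<theta>))
      \<longlongrightarrow> a2*b1 - a2*a1*b1*0 + (a1*b2 - a1*a2*b2*0)) (at_right 0)"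
    unfolding a1_def a2_def b1_def b2_def
    by (intro tendsto_intros pl ql tendsto_ident_at) (use L in auto)
  have FL: "((\<lambda>\<theta>. F \<theta> / \<theta>^3) \<longlongrightarrow> Lc) (at_right 0)"
  proof (rule Lim_transform_eventually)
    show "((\<lambda>\<theta>. (p R2 \<theta>/\<theta>)*(q R1 \<theta>/\<theta>^2) - (p R2 \<theta>/\<theta>)*(p R1 \<theta>/\<theta>)*(q R1 \<theta>/\<theta>^2)*\<theta>
          + ((p R1 \<theta>/\<theta>)*(q R2 \<theta>/\<theta>^2) - (p R1 \<theta>/\<theta>)*(p R2 \<theta>/\<theta>)*(q R2 \<theta>/\<theta>^2)*\<theta>)) \<longlongrightarrow> Lc) (at_right 0)"
      using G unfolding Lc_def by simp
    show "\<forall>\<^sub>F \<theta> in at_right 0. (p R2 \<theta>/\<theta>)*(q R1 \<theta>/\<theta>^2) - (p R2 \<theta>/\<theta>)*(p R1 \<theta>/\<theta>)*(q R1 \<theta>/\<theta>^2)*\<theta>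
          + ((p R1 \<theta>/\<theta>)*(q R2 \<theta>/\<theta>^2) - (p R1 \<theta>/\<theta>)*(p R2 \<theta>/\<theta>)*(q R2 \<theta>/\<theta>^2)*\<theta>) = F \<theta> / \<theta>^3"
      using eventually_at_right_less[of "0::real"]
      by (rule eventually_mono) (simp add: F_def field_simps power2_eq_square power3_eq_cube)
  qed
  have r: "0 < r" "r < 1/2" using assms by auto
  have thlim: "filterlim th (at_right 0) at_top"
    unfolding th_def using r \<sigma> by real_asymp
  have Tl: "((\<lambda>s. th s / s powr (2*r-1)) \<longlongrightarrow> 3/2 * \<sigma> powr (2*r)) at_top"
    unfolding th_def using r \<sigma> by real_asymp
  have FT: "((\<lambda>s. F (th s) / (th s)^3) \<longlongrightarrow> Lc) at_top"
    using filterlim_compose[OF FL thlim] .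
  have thpos: "\<forall>\<^sub>F s in at_top. th s > 0"
    using filterlim_iff[THEN iffD1, OF thlim, rule_format, OF eventually_at_right_less] .
  define c where "c = Lc * (3/2 * \<sigma> powr (2*r))^3 * \<sigma> powr (3*(1-2*r))"
  have c: "c > 0" unfolding c_def using Lc \<sigma> by simp
  have lim: "((\<lambda>s. outage_one M \<alpha> \<sigma>2 Bw \<tau> r s / (\<sigma>2 (S,D) * s) powr (- 3 * (1 - 2 * r))) \<longlongrightarrow> c) at_top"
  proof (rule Lim_transform_eventually)
    show "((\<lambda>s. (F (th s) / (th s)^3) * (th s / s powr (2*r-1))^3 * \<sigma> powr (3*(1-2*r))) \<longlongrightarrow> c) at_top"
      unfolding c_def by (intro tendsto_intros FT Tl)
    show "\<forall>\<^sub>F s in at_top. (F (th s) / (th s)^3) * (th s / s powr (2*r-1))^3 * \<sigma> powr (3*(1-2*r))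
        = outage_one M \<alpha> \<sigma>2 Bw \<tau> r s / (\<sigma>2 (S,D) * s) powr (- 3 * (1 - 2 * r))"
      using thpos eventually_gt_at_top[of "0::real"]
    proof (eventually_elim)
      case (elim s)
      have e1: "(s powr (2*r-1))^3 = s powr (- 3 * (1 - 2 * r))"
        using elim by (simp add: powr_power algebra_simps)
      have e2: "(\<sigma>2 (S,D) * s) powr (- 3 * (1 - 2 * r)) = \<sigma> powr (- 3 * (1 - 2 * r)) * s powr (- 3 * (1 - 2 * r))"
        unfolding \<sigma>_def[symmetric] using elim \<sigma> by (simp add: powr_mult)
      have e3: "\<sigma> powr (3*(1-2*r)) = 1 / \<sigma> powr (- 3 * (1 - 2 * r))"
      proof -
        have "\<sigma> powr (3*(1-2*r)) * \<sigma> powr (- 3 * (1 - 2 * r)) = 1"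
          using \<sigma> by (simp add: powr_add[symmetric])
        moreover have "\<sigma> powr (- 3 * (1 - 2 * r)) > 0" using \<sigma> by simp
        ultimately show ?thesis by (simp add: field_simps)
      qed
      show ?case
        unfolding out[OF elim(2)] e2 e3 e1[symmetric] using elim \<sigma>
        by (simp add: power_divide field_simps)
    qed
  qed
  have "(\<lambda>snr. outage_one M \<alpha> \<sigma>2 Bw \<tau> r snr) \<sim>[at_top] (\<lambda>snr. c * (\<sigma>2 (S,D) * snr) powr (- 3 * (1 - 2 * r)))"
    by (rule asymp_equivI'_const[OF lim]) (use c in simp)
  then show ?thesis using c by blast
qed

end
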